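(* Let $(V,\mathcal H,\iota,W)$ be a generalized functional theory and $k$ a positive integer. Let $\bar{\mathcal F}_p$ be the pure functional of the $k$-convexified theory $(V,\mathcal H\otimes\mathbb C^k,\bar\iota,W\otimes\mathbb 1)$, where $\bar\iota(v)=\iota(v)\otimes\mathbb 1$. Then $\mathrm{conv}_k(\mathcal F_p)=\bar{\mathcal F}_p$.
   Context: A generalized functional theory is a tuple $(V,\mathcal H,\iota,W)$ with $V$ a finite-dimensional real vector space, $\mathcal H$ a finite-dimensional complex Hilbert space, $\iota:V\to i\mathfrak u(\mathcal H)$ linear into the Hermitian operators, $W$ Hermitian. Density operators are regarded as linear functionals via the trace pairing, and $\iota^*$ is the dual map. The pure functional of such a theory is $\mathcal F_p(\rho)=\min\{\langle\Psi|W|\Psi\rangle:\|\Psi\|=1,\iota^*(|\Psi\rangle\langle\Psi|)=\rho\}$, defined on the set $\iota^*(\mathcal P)$ of images of pure states; $\bar{\mathcal F}_p$ is defined analogously with $\mathcal H\otimes\mathbb C^k$, $\bar\iota$, $W\otimes\mathbb 1$. For $f:X\to\mathbb R$, $\mathrm{conv}_k(X)=\{\sum_{i=1}^kt_is_i:s_i\in X,t_i\ge0,\sum t_i=1\}$ and $\mathrm{conv}_k(f):\mathrm{conv}_k(X)\to\mathbb R$, $s\mapsto\inf\{\sum_{i=1}^kt_if(s_i):\sum_it_is_i=s, s_i\in X,t_i\ge0,\sum t_i=1\}$. *)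

theory Defs
  imports "HOL-Analysis.Euclidean_Space" "Jordan_Normal_Form.Matrix"
begin

text \<open>Finite-dimensional complex Hilbert space H = C^n, operators = n x n complex matrices.
  The finite-dimensional real vector space V is an arbitrary type of class euclidean_space.\<close>

definition hermitian_mat :: "nat \<Rightarrow> complex mat \<Rightarrow> bool" where
  "hermitian_mat n A \<longleftrightarrow> A \<in> carrier_mat n n \<and> (\<forall>i<n. \<forall>j<n. A $$ (i, j) = cnj (A $$ (j, i)))"

definition gen_functional_theory :: "nat \<Rightarrow> ('v::euclidean_space \<Rightarrow> complex mat) \<Rightarrow> complex mat \<Rightarrow> bool" where
  "gen_functional_theory n \<iota> W \<longleftrightarrow>
     (\<forall>v. hermitian_mat n (\<iota> v)) \<and>
     (\<forall>v w. \<iota> (v + w) = \<iota> v + \<iota> w) \<and>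
     (\<forall>r v. \<iota> (r *\<^sub>R v) = complex_of_real r \<cdot>\<^sub>m \<iota> v) \<and>
     hermitian_mat n W"

text \<open>Kronecker (tensor) product; basis vector e_a (x) e_i of C^m (x) C^k corresponds to index a*k+i.\<close>
definition kron :: "complex mat \<Rightarrow> complex mat \<Rightarrow> complex mat" where
  "kron A B = mat (dim_row A * dim_row B) (dim_col A * dim_col B)
     (\<lambda>(i, j). A $$ (i div dim_row B, j div dim_col B) * B $$ (i mod dim_row B, j mod dim_col B))"

definition unit_vecs :: "nat \<Rightarrow> complex vec set" where
  "unit_vecs n = {\<Psi>. \<Psi> \<in> carrier_vec n \<and> (\<Sum>i<n. (cmod (\<Psi> $ i))\<^sup>2) = 1}"

definition proj :: "complex vec \<Rightarrow> complex mat" where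
  "proj \<Psi> = mat (dim_vec \<Psi>) (dim_vec \<Psi>) (\<lambda>(i, j). \<Psi> $ i * cnj (\<Psi> $ j))"

definition mat_trace :: "complex mat \<Rightarrow> complex" where
  "mat_trace A = (\<Sum>i<dim_row A. A $$ (i, i))"

text \<open>Dual map iota^*: a density operator rho is sent to the linear functional v |-> tr(rho iota(v))
  (real-valued for Hermitian rho and iota(v)).\<close>
definition dual_map :: "('v \<Rightarrow> complex mat) \<Rightarrow> complex mat \<Rightarrow> ('v \<Rightarrow> real)" where
  "dual_map \<iota> \<rho> = (\<lambda>v. Re (mat_trace (\<rho> * \<iota> v)))"

definition expval :: "complex mat \<Rightarrow> complex vec \<Rightarrow> real" where
  "expval W \<Psi> = Re (conjugate \<Psi> \<bullet> (W *\<^sub>v \<Psi>))"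

definition pure_image :: "nat \<Rightarrow> ('v \<Rightarrow> complex mat) \<Rightarrow> ('v \<Rightarrow> real) set" where
  "pure_image n \<iota> = {dual_map \<iota> (proj \<Psi>) | \<Psi>. \<Psi> \<in> unit_vecs n}"

text \<open>The pure functional (the minimum is attained by compactness; written as Inf).\<close>
definition pure_functional :: "nat \<Rightarrow> ('v \<Rightarrow> complex mat) \<Rightarrow> complex mat \<Rightarrow> ('v \<Rightarrow> real) \<Rightarrow> real" where
  "pure_functional n \<iota> W \<rho> =
     Inf {expval W \<Psi> | \<Psi>. \<Psi> \<in> unit_vecs n \<and> dual_map \<iota> (proj \<Psi>) = \<rho>}"

definition conv_set :: "nat \<Rightarrow> ('v \<Rightarrow> real) set \<Rightarrow> ('v \<Rightarrow> real) set" where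
  "conv_set k X = {s. \<exists>t x. (\<forall>i<k. x i \<in> X \<and> t i \<ge> 0) \<and> (\<Sum>i<k. t i) = 1 \<and>
                            s = (\<lambda>v. \<Sum>i<k. t i * x i v)}"

definition conv_fun :: "nat \<Rightarrow> ('v \<Rightarrow> real) set \<Rightarrow> (('v \<Rightarrow> real) \<Rightarrow> real) \<Rightarrow> ('v \<Rightarrow> real) \<Rightarrow> real" where
  "conv_fun k X f s = Inf {\<Sum>i<k. t i * f (x i) | t x.
       (\<forall>i<k. x i \<in> X \<and> t i \<ge> 0) \<and> (\<Sum>i<k. t i) = 1 \<and> s = (\<lambda>v. \<Sum>i<k. t i * x i v)}"

text \<open>The k-convexified theory: iota-bar(v) = iota(v) (x) 1, W-bar = W (x) 1 on C^n (x) C^k = C^(n*k).\<close>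
definition conv_iota :: "nat \<Rightarrow> ('v \<Rightarrow> complex mat) \<Rightarrow> ('v \<Rightarrow> complex mat)" where
  "conv_iota k \<iota> = (\<lambda>v. kron (\<iota> v) (1\<^sub>m k))"

end

theory Submission
  imports Defs
begin

definition qf :: "complex mat \<Rightarrow> complex vec \<Rightarrow> complex" where
  "qf A \<psi> = (\<Sum>a<dim_vec \<psi>. \<Sum>b<dim_vec \<psi>. cnj (\<psi>$b) * A$$(b,a) * \<psi>$a)"

definition nrm2 :: "complex vec \<Rightarrow> real" where
  "nrm2 \<psi> = (\<Sum>a<dim_vec \<psi>. (cmod (\<psi>$a))\<^sup>2)"

definition slice :: "nat \<Rightarrow> nat \<Rightarrow> nat \<Rightarrow> complex vec \<Rightarrow> complex vec" where
  "slice n k i \<Psi> = vec n (\<lambda>a. \<Psi>$(a*k+i))"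

lemma trace_proj:
  assumes "A \<in> carrier_mat (dim_vec \<psi>) (dim_vec \<psi>)"
  shows "mat_trace (proj \<psi> * A) = qf A \<psi>"
  using assms unfolding mat_trace_def qf_def proj_def
  by (auto simp: scalar_prod_def lessThan_atLeast0 sum_distrib_left mult.commute mult.left_commute
      intro!: sum.cong)

lemma expval_qf:
  assumes "A \<in> carrier_mat (dim_vec \<psi>) (dim_vec \<psi>)"
  shows "expval A \<psi> = Re (qf A \<psi>)"
proof -
  let ?n = "dim_vec \<psi>"
  have "conjugate \<psi> \<bullet> (A *\<^sub>v \<psi>) = (\<Sum>b<?n. cnj (\<psi>$b) * (\<Sum>a<?n. A$$(b,a) * \<psi>$a))"
    using assms by (auto simp: scalar_prod_def lessThan_atLeast0 intro!: sum.cong)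
  also have "\<dots> = (\<Sum>b<?n. \<Sum>a<?n. cnj (\<psi>$b) * A$$(b,a) * \<psi>$a)"
    by (simp add: sum_distrib_left mult.assoc)
  also have "\<dots> = qf A \<psi>" unfolding qf_def by (rule sum.swap)
  finally show ?thesis unfolding expval_def by simp
qed

lemma sum_split: "(\<Sum>p<n*k. f p) = (\<Sum>a<n. \<Sum>i<k. f (a*k+i::nat))"
proof (induction n)
  case 0 then show ?case by simp
next
  case (Suc n)
  have e: "{..<Suc n * k} = {..<n*k} \<union> {n*k..<n*k+k}" by auto
  have "(\<Sum>p<Suc n*k. f p) = (\<Sum>p<n*k. f p) + (\<Sum>p\<in>{n*k..<n*k+k}. f p)"
    unfolding e by (rule sum.union_disjoint) auto
  also have "(\<Sum>p\<in>{n*k..<n*k+k}. f p) = (\<Sum>i<k. f (n*k+i))"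
    using sum.atLeastLessThan_shift_0[of f "n*k" "n*k+k"] by (simp add: lessThan_atLeast0 comp_def)
  also have "(\<Sum>p<n*k. f p) = (\<Sum>a<n. \<Sum>i<k. f (a*k+i))" by (rule Suc.IH)
  also have "(\<Sum>a<n. \<Sum>i<k. f (a*k+i)) + (\<Sum>i<k. f (n*k+i)) = (\<Sum>a<Suc n. \<Sum>i<k. f (a*k+i))"
    by (simp only: sum.lessThan_Suc)
  finally show ?case .
qed

lemma idx_less: "b < n \<Longrightarrow> j < (k::nat) \<Longrightarrow> b*k+j < n*k"
proof -
  assume "b < n" "j < k"
  then have "b*k + j < b*k + k" "(b+1)*k \<le> n*k" by (simp, intro mult_le_mono1, simp)
  then show ?thesis by simp
qed

lemma idx_div: "j < (k::nat) \<Longrightarrow> (b*k+j) div k = b" by simp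
lemma idx_mod: "j < (k::nat) \<Longrightarrow> (b*k+j) mod k = j" by simp


lemma kron_entry:
  assumes "A \<in> carrier_mat n n" "a<n" "i<k" "b<n" "j<k"
  shows "kron A (1\<^sub>m k) $$ (b*k+j, a*k+i) = A$$(b,a) * (if j = i then 1 else 0)"
  using assms idx_less[of b n j k] idx_less[of a n i k]
  by (simp add: kron_def)

lemma kron_carrier: "A \<in> carrier_mat n n \<Longrightarrow> kron A (1\<^sub>m k) \<in> carrier_mat (n*k) (n*k)"
  by (simp add: kron_def)

lemma qf_kron:
  assumes A: "A \<in> carrier_mat n n" and P: "\<Psi> \<in> carrier_vec (n*k)"
  shows "qf (kron A (1\<^sub>m k)) \<Psi> = (\<Sum>i<k. qf A (slice n k i \<Psi>))"
proof -
  let ?K = "kron A (1\<^sub>m k)"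
  have d: "dim_vec \<Psi> = n*k" using P by simp
  have "qf ?K \<Psi> = (\<Sum>a<n. \<Sum>i<k. \<Sum>b<n. \<Sum>j<k. cnj (\<Psi>$(b*k+j)) * ?K$$(b*k+j,a*k+i) * \<Psi>$(a*k+i))"
    unfolding qf_def d sum_split ..
  also have "\<dots> = (\<Sum>a<n. \<Sum>i<k. \<Sum>b<n. \<Sum>j<k. cnj (\<Psi>$(b*k+j)) * (A$$(b,a) * (if j = i then 1 else 0)) * \<Psi>$(a*k+i))"
    using kron_entry[OF A] by (intro sum.cong refl) simp
  also have "\<dots> = (\<Sum>a<n. \<Sum>i<k. \<Sum>b<n. cnj (\<Psi>$(b*k+i)) * A$$(b,a) * \<Psi>$(a*k+i))"
  proof (intro sum.cong refl)
    fix a i b assume "i \<in> {..<k}"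
    have "(\<Sum>j<k. cnj (\<Psi>$(b*k+j)) * (A$$(b,a) * (if j = i then 1 else 0)) * \<Psi>$(a*k+i))
       = (\<Sum>j<k. if j = i then cnj (\<Psi>$(b*k+i)) * A$$(b,a) * \<Psi>$(a*k+i) else 0)"
      by (rule sum.cong) auto
    also have "\<dots> = cnj (\<Psi>$(b*k+i)) * A$$(b,a) * \<Psi>$(a*k+i)"
      using \<open>i \<in> {..<k}\<close> by (simp only: sum.delta finite_lessThan if_True)
    finally show "(\<Sum>j<k. cnj (\<Psi>$(b*k+j)) * (A$$(b,a) * (if j = i then 1 else 0)) * \<Psi>$(a*k+i))
       = cnj (\<Psi>$(b*k+i)) * A$$(b,a) * \<Psi>$(a*k+i)" .
  qed
  also have "\<dots> = (\<Sum>i<k. \<Sum>a<n. \<Sum>b<n. cnj (\<Psi>$(b*k+i)) * A$$(b,a) * \<Psi>$(a*k+i))"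
    by (rule sum.swap)
  also have "\<dots> = (\<Sum>i<k. qf A (slice n k i \<Psi>))"
    unfolding qf_def slice_def by simp
  finally show ?thesis .
qed

lemma qf_smult:
  assumes "\<phi> \<in> carrier_vec n"
  shows "qf A (c \<cdot>\<^sub>v \<phi>) = (cnj c * c) * qf A \<phi>"
  using assms unfolding qf_def
  by (auto simp: sum_distrib_left mult_ac intro!: sum.cong)

lemma nrm2_smult:
  shows "nrm2 (c \<cdot>\<^sub>v \<phi>) = (cmod c)\<^sup>2 * nrm2 \<phi>"
  unfolding nrm2_def
  by (auto simp: sum_distrib_left norm_mult power_mult_distrib intro!: sum.cong)

lemma nrm2_split:
  assumes "\<Psi> \<in> carrier_vec (n*k)"
  shows "nrm2 \<Psi> = (\<Sum>i<k. nrm2 (slice n k i \<Psi>))"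
proof -
  have "nrm2 \<Psi> = (\<Sum>a<n. \<Sum>i<k. (cmod (\<Psi>$(a*k+i)))\<^sup>2)"
    using assms unfolding nrm2_def by (simp add: sum_split)
  also have "\<dots> = (\<Sum>i<k. \<Sum>a<n. (cmod (\<Psi>$(a*k+i)))\<^sup>2)" by (rule sum.swap)
  also have "\<dots> = (\<Sum>i<k. nrm2 (slice n k i \<Psi>))"
    unfolding nrm2_def slice_def by simp
  finally show ?thesis .
qed

lemma unit_vecs_iff: "\<Psi> \<in> Defs.unit_vecs n \<longleftrightarrow> \<Psi> \<in> carrier_vec n \<and> nrm2 \<Psi> = 1"
  unfolding Defs.unit_vecs_def nrm2_def by auto

lemma entry_le1:
  assumes "nrm2 \<phi> = 1" "a < dim_vec \<phi>"
  shows "cmod (\<phi>$a) \<le> 1"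
proof -
  have "(cmod (\<phi>$a))\<^sup>2 \<le> nrm2 \<phi>"
    unfolding nrm2_def using assms(2) by (intro member_le_sum) auto
  then have "(cmod (\<phi>$a))\<^sup>2 \<le> 1\<^sup>2" using assms by simp
  then show ?thesis by (rule power2_le_imp_le) simp
qed

lemma qf_bound:
  assumes "nrm2 \<phi> = 1"
  shows "\<bar>Re (qf A \<phi>)\<bar> \<le> (\<Sum>a<dim_vec \<phi>. \<Sum>b<dim_vec \<phi>. cmod (A$$(b,a)))"
proof -
  let ?m = "dim_vec \<phi>"
  have "\<bar>Re (qf A \<phi>)\<bar> \<le> cmod (qf A \<phi>)" by (rule abs_Re_le_cmod)
  also have "\<dots> \<le> (\<Sum>a<?m. cmod (\<Sum>b<?m. cnj (\<phi>$b) * A$$(b,a) * \<phi>$a))"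
    unfolding qf_def by (rule norm_sum)
  also have "\<dots> \<le> (\<Sum>a<?m. \<Sum>b<?m. cmod (cnj (\<phi>$b) * A$$(b,a) * \<phi>$a))"
    by (intro sum_mono norm_sum)
  also have "\<dots> \<le> (\<Sum>a<?m. \<Sum>b<?m. cmod (A$$(b,a)))"
  proof (intro sum_mono)
    fix a b assume "a \<in> {..<?m}" "b \<in> {..<?m}"
    then have h: "cmod (\<phi>$a) \<le> 1" "cmod (\<phi>$b) \<le> 1" using entry_le1 assms by auto
    have "cmod (cnj (\<phi>$b) * A$$(b,a) * \<phi>$a) = cmod (\<phi>$b) * cmod (A$$(b,a)) * cmod (\<phi>$a)"
      by (simp add: norm_mult)
    also have "\<dots> \<le> 1 * cmod (A$$(b,a)) * 1"
      using h by (intro mult_mono) auto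
    finally show "cmod (cnj (\<phi>$b) * A$$(b,a) * \<phi>$a) \<le> cmod (A$$(b,a))" by simp
  qed
  finally show ?thesis .
qed

lemma decomp_qf:
  assumes A: "A \<in> carrier_mat n n" and P: "\<Psi> \<in> carrier_vec (n*k)"
    and h: "\<And>i. i<k \<Longrightarrow> \<phi> i \<in> carrier_vec n \<and> slice n k i \<Psi> = complex_of_real (sqrt (t i)) \<cdot>\<^sub>v \<phi> i \<and> t i \<ge> 0"
  shows "qf (kron A (1\<^sub>m k)) \<Psi> = (\<Sum>i<k. complex_of_real (t i) * qf A (\<phi> i))"
proof -
  have "qf (kron A (1\<^sub>m k)) \<Psi> = (\<Sum>i<k. qf A (slice n k i \<Psi>))" by (rule qf_kron[OF A P])
  also have "\<dots> = (\<Sum>i<k. complex_of_real (t i) * qf A (\<phi> i))"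
  proof (intro sum.cong refl)
    fix i assume "i \<in> {..<k}"
    then have hi: "\<phi> i \<in> carrier_vec n" "slice n k i \<Psi> = complex_of_real (sqrt (t i)) \<cdot>\<^sub>v \<phi> i" "t i \<ge> 0"
      using h by auto
    have "cnj (complex_of_real (sqrt (t i))) * complex_of_real (sqrt (t i)) = complex_of_real (t i)"
      using hi(3) by (simp flip: of_real_mult)
    then show "qf A (slice n k i \<Psi>) = complex_of_real (t i) * qf A (\<phi> i)"
      using qf_smult[OF hi(1)] hi(2) by simp
  qed
  finally show ?thesis .
qed

lemma decomp_nrm2:
  assumes P: "\<Psi> \<in> carrier_vec (n*k)"
    and h: "\<And>i. i<k \<Longrightarrow> \<phi> i \<in> carrier_vec n \<and> slice n k i \<Psi> = complex_of_real (sqrt (t i)) \<cdot>\<^sub>v \<phi> i \<and> t i \<ge> 0"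
  shows "nrm2 \<Psi> = (\<Sum>i<k. t i * nrm2 (\<phi> i))"
  unfolding nrm2_split[OF P]
proof (intro sum.cong refl)
  fix i assume "i \<in> {..<k}"
  then have hi: "slice n k i \<Psi> = complex_of_real (sqrt (t i)) \<cdot>\<^sub>v \<phi> i" "t i \<ge> 0"
    using h by auto
  then show "nrm2 (slice n k i \<Psi>) = t i * nrm2 (\<phi> i)"
    by (simp add: nrm2_smult)
qed

lemma decomp_main:
  fixes \<iota> :: "'v \<Rightarrow> complex mat"
  assumes I: "\<And>v. \<iota> v \<in> carrier_mat n n" and W: "W \<in> carrier_mat n n"
    and P: "\<Psi> \<in> carrier_vec (n*k)"
    and h: "\<And>i. i<k \<Longrightarrow> \<phi> i \<in> carrier_vec n \<and> slice n k i \<Psi> = complex_of_real (sqrt (t i)) \<cdot>\<^sub>v \<phi> i \<and> t i \<ge> 0"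
  shows "dual_map (conv_iota k \<iota>) (proj \<Psi>) = (\<lambda>v. \<Sum>i<k. t i * dual_map \<iota> (proj (\<phi> i)) v)"
    and "expval (kron W (1\<^sub>m k)) \<Psi> = (\<Sum>i<k. t i * expval W (\<phi> i))"
proof -
  have dP: "dim_vec \<Psi> = n*k" using P by simp
  show "dual_map (conv_iota k \<iota>) (proj \<Psi>) = (\<lambda>v. \<Sum>i<k. t i * dual_map \<iota> (proj (\<phi> i)) v)"
  proof
    fix v
    have "dual_map (conv_iota k \<iota>) (proj \<Psi>) v = Re (qf (kron (\<iota> v) (1\<^sub>m k)) \<Psi>)"
      unfolding dual_map_def conv_iota_def
      using trace_proj[of "kron (\<iota> v) (1\<^sub>m k)" \<Psi>] kron_carrier[OF I[of v], of k] dP by simp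
    also have "\<dots> = (\<Sum>i<k. t i * Re (qf (\<iota> v) (\<phi> i)))"
      using decomp_qf[OF I P h] by simp
    also have "\<dots> = (\<Sum>i<k. t i * dual_map \<iota> (proj (\<phi> i)) v)"
    proof (intro sum.cong refl)
      fix i assume "i \<in> {..<k}"
      then have "\<phi> i \<in> carrier_vec n" using h by auto
      then show "t i * Re (qf (\<iota> v) (\<phi> i)) = t i * dual_map \<iota> (proj (\<phi> i)) v"
        unfolding dual_map_def using trace_proj[of "\<iota> v" "\<phi> i"] I[of v] by simp
    qed
    finally show "dual_map (conv_iota k \<iota>) (proj \<Psi>) v = (\<Sum>i<k. t i * dual_map \<iota> (proj (\<phi> i)) v)" .
  qed
  have "expval (kron W (1\<^sub>m k)) \<Psi> = Re (qf (kron W (1\<^sub>m k)) \<Psi>)"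
    using expval_qf[of "kron W (1\<^sub>m k)" \<Psi>] kron_carrier[OF W, of k] dP by simp
  also have "\<dots> = (\<Sum>i<k. t i * Re (qf W (\<phi> i)))"
    using decomp_qf[OF W P h] by simp
  also have "\<dots> = (\<Sum>i<k. t i * expval W (\<phi> i))"
  proof (intro sum.cong refl)
    fix i assume "i \<in> {..<k}"
    then have "\<phi> i \<in> carrier_vec n" using h by auto
    then show "t i * Re (qf W (\<phi> i)) = t i * expval W (\<phi> i)"
      using expval_qf[of W "\<phi> i"] W by simp
  qed
  finally show "expval (kron W (1\<^sub>m k)) \<Psi> = (\<Sum>i<k. t i * expval W (\<phi> i))" .
qed

lemma build_vec:
  fixes t :: "nat \<Rightarrow> real" and \<phi> :: "nat \<Rightarrow> complex vec"
  assumes "\<And>i. i<k \<Longrightarrow> \<phi> i \<in> carrier_vec n"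
  defines "\<Psi> \<equiv> vec (n*k) (\<lambda>p. complex_of_real (sqrt (t (p mod k))) * \<phi> (p mod k) $ (p div k))"
  shows "\<Psi> \<in> carrier_vec (n*k)"
    and "\<And>i. i<k \<Longrightarrow> slice n k i \<Psi> = complex_of_real (sqrt (t i)) \<cdot>\<^sub>v \<phi> i"
proof -
  show "\<Psi> \<in> carrier_vec (n*k)" unfolding \<Psi>_def by simp
  fix i assume i: "i<k"
  show "slice n k i \<Psi> = complex_of_real (sqrt (t i)) \<cdot>\<^sub>v \<phi> i"
  proof (rule eq_vecI)
    show "dim_vec (slice n k i \<Psi>) = dim_vec (complex_of_real (sqrt (t i)) \<cdot>\<^sub>v \<phi> i)"
      using assms(1)[OF i] unfolding slice_def by simp
    fix a assume "a < dim_vec (complex_of_real (sqrt (t i)) \<cdot>\<^sub>v \<phi> i)"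
    then have a: "a < n" using assms(1)[OF i] by simp
    show "slice n k i \<Psi> $ a = (complex_of_real (sqrt (t i)) \<cdot>\<^sub>v \<phi> i) $ a"
      using a i idx_less[OF a i] assms(1)[OF i] unfolding slice_def \<Psi>_def by simp
  qed
qed

lemma split_vec:
  assumes P: "\<Psi> \<in> carrier_vec (n*k)" and N: "nrm2 \<Psi> = 1"
  shows "\<exists>t \<phi>. (\<forall>i<k. \<phi> i \<in> carrier_vec n \<and> nrm2 (\<phi> i) = 1 \<and>
            slice n k i \<Psi> = complex_of_real (sqrt (t i)) \<cdot>\<^sub>v \<phi> i \<and> t i \<ge> 0) \<and> (\<Sum>i<k. t i) = 1"
proof -
  have "n \<noteq> 0"
  proof
    assume "n = 0"
    then have "nrm2 \<Psi> = 0" using P unfolding nrm2_def by simp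
    then show False using N by simp
  qed
  then have n: "0 < n" by simp
  define e where "e = (unit_vec n 0 :: complex vec)"
  have e: "e \<in> carrier_vec n" "nrm2 e = 1"
  proof -
    show "e \<in> carrier_vec n" unfolding e_def by simp
    have "nrm2 e = (\<Sum>a<n. if a = 0 then 1 else 0)"
      unfolding nrm2_def e_def by (intro sum.cong) auto
    also have "\<dots> = 1" using n by simp
    finally show "nrm2 e = 1" .
  qed
  define t where "t i = nrm2 (slice n k i \<Psi>)" for i
  define \<phi> where "\<phi> i = (if t i = 0 then e else complex_of_real (1 / sqrt (t i)) \<cdot>\<^sub>v slice n k i \<Psi>)" for i
  have t0: "t i \<ge> 0" for i unfolding t_def nrm2_def by (intro sum_nonneg) simp
  have "\<forall>i<k. \<phi> i \<in> carrier_vec n \<and> nrm2 (\<phi> i) = 1 \<and>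
            slice n k i \<Psi> = complex_of_real (sqrt (t i)) \<cdot>\<^sub>v \<phi> i \<and> t i \<ge> 0"
  proof (intro allI impI conjI)
    fix i assume i: "i < k"
    have sc: "slice n k i \<Psi> \<in> carrier_vec n" unfolding slice_def by simp
    show "\<phi> i \<in> carrier_vec n" unfolding \<phi>_def using e sc by simp
    show "t i \<ge> 0" by (rule t0)
    show "nrm2 (\<phi> i) = 1"
    proof (cases "t i = 0")
      case True then show ?thesis unfolding \<phi>_def using e by simp
    next
      case False
      then have "t i > 0" using t0[of i] by simp
      then show ?thesis unfolding \<phi>_def using False
        by (simp add: nrm2_smult t_def[symmetric] power_divide norm_divide)
    qed
    show "slice n k i \<Psi> = complex_of_real (sqrt (t i)) \<cdot>\<^sub>v \<phi> i"
    proof (cases "t i = 0")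
      case True
      have z: "slice n k i \<Psi> $ a = 0" if "a < n" for a
      proof -
        have "(\<Sum>a<n. (cmod (slice n k i \<Psi> $ a))\<^sup>2) = 0"
          using True sc unfolding t_def nrm2_def by simp
        then have "(cmod (slice n k i \<Psi> $ a))\<^sup>2 = 0"
          using that by (subst (asm) sum_nonneg_eq_0_iff) auto
        then show ?thesis by simp
      qed
      show ?thesis unfolding \<phi>_def using True z sc e by (intro eq_vecI) auto
    next
      case False
      then have "t i > 0" using t0[of i] by simp
      then show ?thesis unfolding \<phi>_def using False sc
        by (intro eq_vecI) (auto simp flip: of_real_mult)
    qed
  qed
  moreover have "(\<Sum>i<k. t i) = 1" using N nrm2_split[OF P] unfolding t_def by simp
  ultimately show ?thesis by blast
qed

lemma wsum_mono:
  assumes "\<And>i. i<k \<Longrightarrow> (t i::real) \<ge> 0 \<and> g i \<le> h i"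
  shows "(\<Sum>i<k. t i * g i) \<le> (\<Sum>i<k. t i * h i)"
  using assms by (intro sum_mono mult_left_mono) auto

lemma wsum_ge:
  assumes "\<And>i. i<k \<Longrightarrow> (t i::real) \<ge> 0 \<and> c \<le> g i" "(\<Sum>i<k. t i) = 1"
  shows "c \<le> (\<Sum>i<k. t i * g i)"
proof -
  have "(\<Sum>i<k. t i * c) \<le> (\<Sum>i<k. t i * g i)" using assms(1) by (rule wsum_mono)
  moreover have "(\<Sum>i<k. t i * c) = c" using assms(2) by (simp add: sum_distrib_right[symmetric])
  ultimately show ?thesis by simp
qed

theorem proposition2p40:
  fixes n k :: nat and \<iota> :: "'v::euclidean_space \<Rightarrow> complex mat" and W :: "complex mat"
  assumes "gen_functional_theory n \<iota> W"
    and "k > 0"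
  shows "conv_set k (pure_image n \<iota>) = pure_image (n * k) (conv_iota k \<iota>)
    \<and> (\<forall>\<rho> \<in> conv_set k (pure_image n \<iota>).
         conv_fun k (pure_image n \<iota>) (pure_functional n \<iota> W) \<rho>
           = pure_functional (n * k) (conv_iota k \<iota>) (kron W (1\<^sub>m k)) \<rho>)"
proof -
  have I: "\<And>v. \<iota> v \<in> carrier_mat n n" and Wc: "W \<in> carrier_mat n n"
    using assms(1) unfolding gen_functional_theory_def hermitian_mat_def by auto
  let ?X = "pure_image n \<iota>"
  let ?F = "pure_functional n \<iota> W"
  let ?iB = "conv_iota k \<iota>"
  let ?WB = "kron W (1\<^sub>m k)"
  define M where "M = (\<Sum>a<n. \<Sum>b<n. cmod (W$$(b,a)))"
  have lowW: "-M \<le> expval W \<phi>" if "\<phi> \<in> Defs.unit_vecs n" for \<phi>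
  proof -
    have c: "\<phi> \<in> carrier_vec n" "nrm2 \<phi> = 1" using that unit_vecs_iff by auto
    have "\<bar>Re (qf W \<phi>)\<bar> \<le> M" using qf_bound[OF c(2), of W] c(1) unfolding M_def by simp
    moreover have "expval W \<phi> = Re (qf W \<phi>)" using expval_qf[of W \<phi>] c(1) Wc by simp
    ultimately show ?thesis by linarith
  qed
  let ?S = "\<lambda>x. {expval W \<Psi> | \<Psi>. \<Psi> \<in> Defs.unit_vecs n \<and> dual_map \<iota> (proj \<Psi>) = x}"
  have Sbdd: "bdd_below (?S x)" for x
    using lowW by (intro bdd_belowI[of _ "-M"]) auto
  have Sne: "?S x \<noteq> {}" if "x \<in> ?X" for x
    using that unfolding pure_image_def by auto
  have F_low: "-M \<le> ?F x" if "x \<in> ?X" for x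
    unfolding pure_functional_def using Sne[OF that] lowW by (intro cInf_greatest) auto
  have F_le: "?F (dual_map \<iota> (proj \<phi>)) \<le> expval W \<phi>" if "\<phi> \<in> Defs.unit_vecs n" for \<phi>
    unfolding pure_functional_def using that by (intro cInf_lower[OF _ Sbdd]) auto
  have F_approx: "\<exists>\<phi>. \<phi> \<in> Defs.unit_vecs n \<and> dual_map \<iota> (proj \<phi>) = x \<and> expval W \<phi> < ?F x + e"
    if xX: "x \<in> ?X" and ep: "e > 0" for x e
  proof -
    have "Inf (?S x) < ?F x + e" using ep unfolding pure_functional_def by simp
    then obtain y where "y \<in> ?S x" "y < ?F x + e"
      using cInf_less_iff[OF Sne[OF xX] Sbdd] by blast
    then show ?thesis by auto
  qed
  have build: "\<exists>\<Psi>. \<Psi> \<in> Defs.unit_vecs (n*k) \<and>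
      dual_map ?iB (proj \<Psi>) = (\<lambda>v. \<Sum>i<k. t i * dual_map \<iota> (proj (\<phi> i)) v) \<and>
      expval ?WB \<Psi> = (\<Sum>i<k. t i * expval W (\<phi> i))"
    if h: "\<forall>i<k. \<phi> i \<in> Defs.unit_vecs n \<and> t i \<ge> 0" "(\<Sum>i<k. t i) = 1" for t \<phi>
  proof -
    define \<Psi> where "\<Psi> = vec (n*k) (\<lambda>p. complex_of_real (sqrt (t (p mod k))) * \<phi> (p mod k) $ (p div k))"
    have phc: "\<And>i. i<k \<Longrightarrow> \<phi> i \<in> carrier_vec n" using h(1) unit_vecs_iff by auto
    have P: "\<Psi> \<in> carrier_vec (n*k)" unfolding \<Psi>_def by simp
    have hh: "\<And>i. i<k \<Longrightarrow> \<phi> i \<in> carrier_vec n \<and> slice n k i \<Psi> = complex_of_real (sqrt (t i)) \<cdot>\<^sub>v \<phi> i \<and> t i \<ge> 0"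
      using build_vec(2)[where t=t and \<phi>=\<phi> and k=k and n=n, OF phc] phc h(1) unfolding \<Psi>_def by blast
    have "nrm2 \<Psi> = (\<Sum>i<k. t i * nrm2 (\<phi> i))" by (rule decomp_nrm2[where n=n and \<Psi>=\<Psi> and k=k and \<phi>=\<phi> and t=t, OF P hh])
    also have "\<dots> = (\<Sum>i<k. t i)" using h(1) unit_vecs_iff by (intro sum.cong) auto
    finally have "\<Psi> \<in> Defs.unit_vecs (n*k)" using P h(2) unit_vecs_iff by auto
    then show ?thesis using decomp_main[where \<iota>=\<iota> and n=n and W=W and \<Psi>=\<Psi> and k=k and \<phi>=\<phi> and t=t, OF I Wc P hh] by blast
  qed
  have split: "\<exists>t \<phi>. (\<forall>i<k. \<phi> i \<in> Defs.unit_vecs n \<and> t i \<ge> 0) \<and> (\<Sum>i<k. t i) = 1 \<and>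
      dual_map ?iB (proj \<Psi>) = (\<lambda>v. \<Sum>i<k. t i * dual_map \<iota> (proj (\<phi> i)) v) \<and>
      expval ?WB \<Psi> = (\<Sum>i<k. t i * expval W (\<phi> i))"
    if "\<Psi> \<in> Defs.unit_vecs (n*k)" for \<Psi>
  proof -
    have P: "\<Psi> \<in> carrier_vec (n*k)" "nrm2 \<Psi> = 1" using that unit_vecs_iff by auto
    obtain t \<phi> where tp: "\<forall>i<k. \<phi> i \<in> carrier_vec n \<and> nrm2 (\<phi> i) = 1 \<and>
            slice n k i \<Psi> = complex_of_real (sqrt (t i)) \<cdot>\<^sub>v \<phi> i \<and> t i \<ge> 0" "(\<Sum>i<k. t i) = 1"
      using split_vec[OF P] by blast
    have hh: "\<And>i. i<k \<Longrightarrow> \<phi> i \<in> carrier_vec n \<and> slice n k i \<Psi> = complex_of_real (sqrt (t i)) \<cdot>\<^sub>v \<phi> i \<and> t i \<ge> 0"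
      using tp(1) by blast
    have "\<forall>i<k. \<phi> i \<in> Defs.unit_vecs n \<and> t i \<ge> 0" using tp(1) unit_vecs_iff by blast
    then show ?thesis using tp(2) decomp_main[where \<iota>=\<iota> and n=n and W=W and \<Psi>=\<Psi> and k=k and \<phi>=\<phi> and t=t, OF I Wc P(1) hh] by blast
  qed
  have part1: "conv_set k ?X = pure_image (n * k) ?iB"
  proof
    show "conv_set k ?X \<subseteq> pure_image (n * k) ?iB"
    proof
      fix s assume "s \<in> conv_set k ?X"
      then obtain t x where tx: "\<forall>i<k. x i \<in> ?X \<and> t i \<ge> 0" "(\<Sum>i<k. t i) = 1"
          "s = (\<lambda>v. \<Sum>i<k. t i * x i v)"
        unfolding conv_set_def by blast
      have "\<forall>i\<in>{..<k}. \<exists>\<phi>. \<phi> \<in> Defs.unit_vecs n \<and> x i = dual_map \<iota> (proj \<phi>)"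
        using tx(1) unfolding pure_image_def by blast
      then obtain \<phi> where ph: "\<forall>i\<in>{..<k}. \<phi> i \<in> Defs.unit_vecs n \<and> x i = dual_map \<iota> (proj (\<phi> i))"
        by (metis (no_types, lifting) bchoice)
      have "\<forall>i<k. \<phi> i \<in> Defs.unit_vecs n \<and> t i \<ge> 0" using ph tx(1) by blast
      then obtain \<Psi> where Ps: "\<Psi> \<in> Defs.unit_vecs (n*k)"
          "dual_map ?iB (proj \<Psi>) = (\<lambda>v. \<Sum>i<k. t i * dual_map \<iota> (proj (\<phi> i)) v)"
        using build tx(2) by blast
      have "s = (\<lambda>v. \<Sum>i<k. t i * dual_map \<iota> (proj (\<phi> i)) v)"
        unfolding tx(3) using ph by (intro ext sum.cong) auto
      then have "s = dual_map ?iB (proj \<Psi>)" using Ps(2) by simp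
      then show "s \<in> pure_image (n * k) ?iB" unfolding pure_image_def using Ps(1) by blast
    qed
    show "pure_image (n * k) ?iB \<subseteq> conv_set k ?X"
    proof
      fix s assume "s \<in> pure_image (n * k) ?iB"
      then obtain \<Psi> where P: "\<Psi> \<in> Defs.unit_vecs (n*k)" "s = dual_map ?iB (proj \<Psi>)"
        unfolding pure_image_def by blast
      obtain t \<phi> where tp: "\<forall>i<k. \<phi> i \<in> Defs.unit_vecs n \<and> t i \<ge> 0" "(\<Sum>i<k. t i) = 1"
          "dual_map ?iB (proj \<Psi>) = (\<lambda>v. \<Sum>i<k. t i * dual_map \<iota> (proj (\<phi> i)) v)"
        using split[OF P(1)] by blast
      have "\<forall>i<k. (\<lambda>i. dual_map \<iota> (proj (\<phi> i))) i \<in> ?X \<and> t i \<ge> 0"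
        using tp(1) unfolding pure_image_def by blast
      then show "s \<in> conv_set k ?X" unfolding conv_set_def
        by (intro CollectI exI[of _ t] exI[of _ "\<lambda>i. dual_map \<iota> (proj (\<phi> i))"] conjI)
          (use tp P(2) in auto)
    qed
  qed
  have part2: "conv_fun k ?X ?F \<rho> = pure_functional (n * k) ?iB ?WB \<rho>"
    if rho: "\<rho> \<in> conv_set k ?X" for \<rho>
  proof -
    define S1 where "S1 = {\<Sum>i<k. t i * ?F (x i) | t x.
       (\<forall>i<k. x i \<in> ?X \<and> t i \<ge> 0) \<and> (\<Sum>i<k. t i) = 1 \<and> \<rho> = (\<lambda>v. \<Sum>i<k. t i * x i v)}"
    define S2 where "S2 = {expval ?WB \<Psi> | \<Psi>. \<Psi> \<in> Defs.unit_vecs (n*k) \<and> dual_map ?iB (proj \<Psi>) = \<rho>}"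
    have L: "conv_fun k ?X ?F \<rho> = Inf S1" unfolding conv_fun_def S1_def ..
    have R: "pure_functional (n * k) ?iB ?WB \<rho> = Inf S2" unfolding pure_functional_def S2_def ..
    obtain t0 x0 where tx0: "\<forall>i<k. x0 i \<in> ?X \<and> t0 i \<ge> 0" "(\<Sum>i<k. t0 i) = 1"
          "\<rho> = (\<lambda>v. \<Sum>i<k. t0 i * x0 i v)"
      using rho unfolding conv_set_def by blast
    have "(\<Sum>i<k. t0 i * ?F (x0 i)) \<in> S1" unfolding S1_def using tx0 by blast
    then have S1ne: "S1 \<noteq> {}" by blast
    have "\<rho> \<in> pure_image (n * k) ?iB" using rho part1 by simp
    then have S2ne: "S2 \<noteq> {}" unfolding pure_image_def S2_def by blast
    have S1bdd: "bdd_below S1"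
    proof (rule bdd_belowI)
      fix y assume "y \<in> S1"
      then obtain t x where tx: "\<forall>i<k. x i \<in> ?X \<and> t i \<ge> 0" "(\<Sum>i<k. t i) = 1"
          "y = (\<Sum>i<k. t i * ?F (x i))"
        unfolding S1_def by blast
      show "-M \<le> y" unfolding tx(3) using tx(1,2) F_low by (intro wsum_ge) auto
    qed
    have S2bdd: "bdd_below S2"
    proof (rule bdd_belowI)
      fix y assume "y \<in> S2"
      then obtain \<Psi> where P: "\<Psi> \<in> Defs.unit_vecs (n*k)" "y = expval ?WB \<Psi>"
        unfolding S2_def by blast
      obtain t \<phi> where tp: "\<forall>i<k. \<phi> i \<in> Defs.unit_vecs n \<and> t i \<ge> 0" "(\<Sum>i<k. t i) = 1"
          "expval ?WB \<Psi> = (\<Sum>i<k. t i * expval W (\<phi> i))"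
        using split[OF P(1)] by blast
      show "-M \<le> y" unfolding P(2) tp(3) using tp(1,2) lowW by (intro wsum_ge) auto
    qed
    have "Inf S1 \<le> Inf S2"
    proof (rule cInf_greatest[OF S2ne])
      fix y assume "y \<in> S2"
      then obtain \<Psi> where P: "\<Psi> \<in> Defs.unit_vecs (n*k)" "dual_map ?iB (proj \<Psi>) = \<rho>" "y = expval ?WB \<Psi>"
        unfolding S2_def by blast
      obtain t \<phi> where tp: "\<forall>i<k. \<phi> i \<in> Defs.unit_vecs n \<and> t i \<ge> 0" "(\<Sum>i<k. t i) = 1"
          "dual_map ?iB (proj \<Psi>) = (\<lambda>v. \<Sum>i<k. t i * dual_map \<iota> (proj (\<phi> i)) v)"
          "expval ?WB \<Psi> = (\<Sum>i<k. t i * expval W (\<phi> i))"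
        using split[OF P(1)] by blast
      let ?x = "\<lambda>i. dual_map \<iota> (proj (\<phi> i))"
      have "\<forall>i<k. ?x i \<in> ?X \<and> t i \<ge> 0" using tp(1) unfolding pure_image_def by blast
      moreover have "\<rho> = (\<lambda>v. \<Sum>i<k. t i * ?x i v)" using tp(3) P(2) by simp
      ultimately have "(\<Sum>i<k. t i * ?F (?x i)) \<in> S1" unfolding S1_def
        by (intro CollectI exI[of _ t] exI[of _ ?x] conjI) (use tp(2) in auto)
      then have "Inf S1 \<le> (\<Sum>i<k. t i * ?F (?x i))" by (rule cInf_lower[OF _ S1bdd])
      also have "\<dots> \<le> (\<Sum>i<k. t i * expval W (\<phi> i))"
        using tp(1) F_le by (intro wsum_mono) auto
      finally show "Inf S1 \<le> y" using P(3) tp(4) by simp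
    qed
    moreover have "Inf S2 \<le> Inf S1"
    proof (rule cInf_greatest[OF S1ne])
      fix y assume "y \<in> S1"
      then obtain t x where tx: "\<forall>i<k. x i \<in> ?X \<and> t i \<ge> 0" "(\<Sum>i<k. t i) = 1"
          "\<rho> = (\<lambda>v. \<Sum>i<k. t i * x i v)" "y = (\<Sum>i<k. t i * ?F (x i))"
        unfolding S1_def by blast
      show "Inf S2 \<le> y"
      proof (rule field_le_epsilon)
        fix e :: real assume e: "0 < e"
        have "\<forall>i\<in>{..<k}. \<exists>\<phi>. \<phi> \<in> Defs.unit_vecs n \<and> dual_map \<iota> (proj \<phi>) = x i \<and> expval W \<phi> < ?F (x i) + e"
          using tx(1) F_approx e by blast
        then obtain \<phi> where ph: "\<forall>i\<in>{..<k}. \<phi> i \<in> Defs.unit_vecs n \<and> dual_map \<iota> (proj (\<phi> i)) = x i \<and> expval W (\<phi> i) < ?F (x i) + e"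
          by (metis (no_types, lifting) bchoice)
        have "\<forall>i<k. \<phi> i \<in> Defs.unit_vecs n \<and> t i \<ge> 0" using ph tx(1) by blast
        then obtain \<Psi> where B: "\<Psi> \<in> Defs.unit_vecs (n*k)"
            "dual_map ?iB (proj \<Psi>) = (\<lambda>v. \<Sum>i<k. t i * dual_map \<iota> (proj (\<phi> i)) v)"
            "expval ?WB \<Psi> = (\<Sum>i<k. t i * expval W (\<phi> i))"
          using build tx(2) by blast
        have "dual_map ?iB (proj \<Psi>) = \<rho>"
          unfolding B(2) tx(3) using ph by (intro ext sum.cong) auto
        then have "expval ?WB \<Psi> \<in> S2" unfolding S2_def using B(1) by blast
        then have "Inf S2 \<le> expval ?WB \<Psi>" by (rule cInf_lower[OF _ S2bdd])
        also have "\<dots> \<le> (\<Sum>i<k. t i * (?F (x i) + e))"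
          unfolding B(3) using ph tx(1) by (intro wsum_mono) (auto intro: less_imp_le)
        also have "\<dots> = (\<Sum>i<k. t i * ?F (x i)) + (\<Sum>i<k. t i) * e"
          by (simp add: distrib_left sum.distrib sum_distrib_right)
        also have "\<dots> = y + e" using tx(2,4) by simp
        finally show "Inf S2 \<le> y + e" .
      qed
    qed
    ultimately show ?thesis using L R by simp
  qed
  show ?thesis using part1 part2 by blast
qed

end
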